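(* Let $q$ be a prime power, $n$ a positive integer, $a\in\mathbb{F}_q$, let $l$ be a divisor of $q^n-1$, and let $p_1,\ldots,p_r$ be all the primes dividing $q^n-1$ but not $l$. Then $$N_a(q^n-1,q^n-1)\geq \sum_{i=1}^r N_a(p_il,l)+\sum_{i=1}^r N_a(l,p_il)-(2r-1)N_a(l,l).$$
   Context: For a divisor $e$ of $q^n-1$, an element $\xi\in\mathbb{F}_{q^n}^*$ is $e$-free if whenever $\xi=\gamma^d$ with $d\mid e$ and $\gamma\in\mathbb{F}_{q^n}$, we must have $d=1$. For divisors $l_1,l_2$ of $q^n-1$ and $a\in\mathbb{F}_q$, $N_a(l_1,l_2)$ is the number of $\alpha\in\mathbb{F}_{q^n}^*$ such that $\alpha$ is $l_1$-free, $\alpha+\alpha^{-1}$ is nonzero and $l_2$-free, and $\mathrm{Tr}_{\mathbb{F}_{q^n}|\mathbb{F}_q}(\alpha)=a$, where $\mathrm{Tr}_{\mathbb{F}_{q^n}|\mathbb{F}_q}(\alpha)=\alpha+\alpha^q+\cdots+\alpha^{q^{n-1}}$. *)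

theory Defs
  imports "HOL-Computational_Algebra.Primes" "HOL-Library.Cardinality"
begin

text \<open>The field F_{q^n} is modelled as a finite field type 'a with CARD('a) = q^n;
  the subfield F_q is its set of elements fixed by x |-> x^q.\<close>

definition is_free :: "nat \<Rightarrow> 'a::field \<Rightarrow> bool" where
  "is_free e \<xi> \<longleftrightarrow> \<xi> \<noteq> 0 \<and> (\<forall>d (\<gamma>::'a). d dvd e \<and> \<xi> = \<gamma> ^ d \<longrightarrow> d = 1)"

definition trace_ext :: "nat \<Rightarrow> nat \<Rightarrow> 'a::field \<Rightarrow> 'a" where
  "trace_ext q n \<alpha> = (\<Sum>i<n. \<alpha> ^ (q ^ i))"

definition N_count :: "nat \<Rightarrow> nat \<Rightarrow> 'a::{field,finite} \<Rightarrow> nat \<Rightarrow> nat \<Rightarrow> nat" where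
  "N_count q n a l1 l2 = card {\<alpha>::'a. \<alpha> \<noteq> 0 \<and> is_free l1 \<alpha> \<and> \<alpha> + inverse \<alpha> \<noteq> 0
      \<and> is_free l2 (\<alpha> + inverse \<alpha>) \<and> trace_ext q n \<alpha> = a}"

end

theory Submission
  imports Defs
begin

lemma sieve_abs:
  fixes B F :: "'b set" and P :: "nat set"
  assumes fB: "finite B" and fP: "finite P" and fF: "finite F"
    and s1: "\<And>p. p \<in> P \<Longrightarrow> A1 p \<subseteq> B"
    and s2: "\<And>p. p \<in> P \<Longrightarrow> A2 p \<subseteq> B"
    and sub: "B - (\<Union>p\<in>P. (B - A1 p) \<union> (B - A2 p)) \<subseteq> F"
  shows "int (card F) \<ge> (\<Sum>p\<in>P. int (card (A1 p))) + (\<Sum>p\<in>P. int (card (A2 p)))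
      - (2 * int (card P) - 1) * int (card B)"
proof -
  let ?U = "\<Union>p\<in>P. (B - A1 p) \<union> (B - A2 p)"
  have "card (B - ?U) \<le> card F" by (rule card_mono[OF fF sub])
  moreover have "int (card B) - int (card ?U) \<le> int (card (B - ?U))"
  proof -
    have "card B - card ?U \<le> card (B - ?U)" by (rule diff_card_le_card_Diff) (use fB fP in auto)
    thus ?thesis by linarith
  qed
  moreover have c1: "card ?U \<le> (\<Sum>p\<in>P. card ((B - A1 p) \<union> (B - A2 p)))"
    using fP by (rule card_UN_le)
  moreover have "int (card ((B - A1 p) \<union> (B - A2 p))) \<le>
      (int (card B) - int (card (A1 p))) + (int (card B) - int (card (A2 p)))" if "p \<in> P" for p
  proof -
    have "card ((B - A1 p) \<union> (B - A2 p)) \<le> card (B - A1 p) + card (B - A2 p)"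
      by (rule card_Un_le)
    moreover have "card (B - A1 p) = card B - card (A1 p)"
      using s1[OF that] fB by (meson card_Diff_subset finite_subset)
    moreover have "card (B - A2 p) = card B - card (A2 p)"
      using s2[OF that] fB by (meson card_Diff_subset finite_subset)
    moreover have "card (A1 p) \<le> card B" using s1[OF that] fB card_mono by blast
    moreover have "card (A2 p) \<le> card B" using s2[OF that] fB card_mono by blast
    ultimately show ?thesis by linarith
  qed
  hence c2: "(\<Sum>p\<in>P. int (card ((B - A1 p) \<union> (B - A2 p)))) \<le>
      (\<Sum>p\<in>P. (int (card B) - int (card (A1 p))) + (int (card B) - int (card (A2 p))))"
    by (rule sum_mono)
  have c1': "int (card ?U) \<le> (\<Sum>p\<in>P. int (card ((B - A1 p) \<union> (B - A2 p))))"
    using of_nat_mono[OF c1] by (simp add: of_nat_sum)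
  have eq: "(\<Sum>p\<in>P. (int (card B) - int (card (A1 p))) + (int (card B) - int (card (A2 p))))
     = 2 * int (card P) * int (card B) - (\<Sum>p\<in>P. int (card (A1 p))) - (\<Sum>p\<in>P. int (card (A2 p)))"
    by (simp add: sum.distrib sum_subtractf algebra_simps)
  have "(2 * int (card P) - 1) * int (card B) = 2 * int (card P) * int (card B) - int (card B)"
    by (simp add: algebra_simps)
  ultimately show ?thesis using c1' c2 eq by linarith
qed

lemma free_mono: "is_free e x \<Longrightarrow> e' dvd e \<Longrightarrow> is_free e' x"
  unfolding is_free_def by (metis dvd_trans)

theorem lemma3p3:
  fixes q n l :: nat and a :: "'a::{field,finite}"
  assumes "\<exists>p k. prime p \<and> k > 0 \<and> q = p ^ k"
    and "n > 0"
    and "CARD('a) = q ^ n"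
    and "a ^ q = a"
    and "l dvd q ^ n - 1"
  shows "let P = {p::nat. prime p \<and> p dvd q ^ n - 1 \<and> \<not> p dvd l}; r = card P in
    int (N_count q n a (q ^ n - 1) (q ^ n - 1))
      \<ge> (\<Sum>p\<in>P. int (N_count q n a (p * l) l)) + (\<Sum>p\<in>P. int (N_count q n a l (p * l)))
        - (2 * int r - 1) * int (N_count q n a l l)"
proof -
  define P where "P = {p::nat. prime p \<and> p dvd q ^ n - 1 \<and> \<not> p dvd l}"
  define S where "S = (\<lambda>e1 e2. {\<alpha>::'a. \<alpha> \<noteq> 0 \<and> is_free e1 \<alpha> \<and> \<alpha> + inverse \<alpha> \<noteq> 0
      \<and> is_free e2 (\<alpha> + inverse \<alpha>) \<and> trace_ext q n \<alpha> = a})"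
  have N: "N_count q n a e1 e2 = card (S e1 e2)" for e1 e2
    unfolding N_count_def S_def by simp
  obtain p0 k where pk: "prime p0" "k > 0" "q = p0 ^ k" using assms(1) by blast
  have p2: "p0 \<ge> 2" using pk(1) by (simp add: prime_ge_2_nat)
  have "p0 \<le> p0 ^ k" using p2 pk(2) by (intro self_le_power) auto
  hence q2: "q \<ge> 2" using p2 pk(3) by linarith
  have "q \<le> q ^ n" using q2 assms(2) by (intro self_le_power) auto
  hence "q ^ n \<ge> 2" using q2 by linarith
  hence pos: "q ^ n - 1 > 0" by simp
  have fP: "finite P" unfolding P_def
    by (rule finite_subset[of _ "{..q^n - 1}"]) (use pos in \<open>auto dest: dvd_imp_le\<close>)
  have key: "is_free (q ^ n - 1) x" if l: "is_free l x" and pl: "\<forall>p\<in>P. is_free (p * l) x" for x :: 'a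
    unfolding is_free_def
  proof (intro conjI allI impI)
    show "x \<noteq> 0" using l unfolding is_free_def by simp
    fix d and g :: 'a assume h: "d dvd q ^ n - 1 \<and> x = g ^ d"
    show "d = 1"
    proof (rule ccontr)
      assume "d \<noteq> 1"
      then obtain p where p: "prime p" "p dvd d" using prime_factor_nat by blast
      then obtain m where m: "d = p * m" by blast
      have xp: "x = (g ^ m) ^ p" using h m by (simp add: power_mult[symmetric] mult.commute)
      have pd: "p dvd q ^ n - 1" using h p dvd_trans by blast
      show False
      proof (cases "p dvd l")
        case True
        thus False using l xp p unfolding is_free_def by (metis not_prime_1)
      next
        case False
        hence "p \<in> P" using p pd unfolding P_def by simp
        hence "is_free (p * l) x" using pl by blast
        thus False using xp p unfolding is_free_def by (metis dvd_triv_left not_prime_1)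
      qed
    qed
  qed
  have "int (card (S (q ^ n - 1) (q ^ n - 1))) \<ge>
      (\<Sum>p\<in>P. int (card (S (p * l) l))) + (\<Sum>p\<in>P. int (card (S l (p * l))))
        - (2 * int (card P) - 1) * int (card (S l l))"
  proof (rule sieve_abs)
    have fm: "is_free (p * l) x \<Longrightarrow> is_free l x" for p and x :: 'a
      by (erule free_mono) simp
    show "S (p * l) l \<subseteq> S l l" if "p \<in> P" for p
      unfolding S_def using fm[of p] by blast
    show "S l (p * l) \<subseteq> S l l" if "p \<in> P" for p
      unfolding S_def using fm[of p] by blast
    show "S l l - (\<Union>p\<in>P. (S l l - S (p * l) l) \<union> (S l l - S l (p * l))) \<subseteq> S (q ^ n - 1) (q ^ n - 1)"
      unfolding S_def using key by auto
  qed (simp_all add: fP)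
  thus ?thesis unfolding Let_def N P_def by simp
qed

end
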